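(* Let $n,\ell$ be positive integers, $e=\gcd(n,\ell)$, $A=A_n^\ell$, $\mathcal{P}$ the set of non-crossing partitions of $\underline{e}$, and $\Omega,\Omega^{-1}$ the syzygy and cosyzygy functors applied elementwise. For $p\in\mathcal{P}$ and $1\le i\le e$: (1) $\Omega(\mathcal{S}'_{p,i})=\mathcal{L}'_{m_1(p),i}$; (2) $\Omega^{-1}(\mathcal{L}'_{p,i})=\mathcal{S}'_{m_2(p),i}$; (3) $\Omega^{-1}(\mathcal{S}'_{p,i})=\mathcal{L}'_{m_2(p),k_i}$; (4) $\Omega(\mathcal{L}'_{p,i})=\mathcal{S}'_{m_1(p),\overline{k_i+1}}$, where $k_i$ is computed with respect to $p$ and $\bar a$ is taken modulo $e$.
   Context: $A_m^\ell=kQ/I$ ($k$ algebraically closed), $Q$ the cyclic quiver with vertices $1,\dots,m$, arrows $i\to i+1$, $m\to 1$, $I$ generated by paths of length $\ell+1$. Indecomposable modules are uniserial with composition factors $S_i,S_{i+1},\dots$ (indices mod $m$) from the top. $M^i_{j,t}$ is the indecomposable module with top $S_i$, socle $S_j$, $S_i$ occurring $t+1$ times. For $a\in\mathbb{Z}$, $\bar a\in\underline{e}$ with $a\equiv \bar a\pmod e$. For a non-crossing partition $p$ of $\underline{e}$ (no $a<x<b<y$ with $a,b$ in one block, $x,y$ in another), $p(i)$ is the block of $i$, $k_i$ the first element of $p(i)$ in the sequence $\overline{i-1},\overline{i-2},\dots,\overline{i-e}=i$, $\widehat{i}=\{i,\overline{i+1},\dots,k_i\}$. Write $\ell=de$.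 Over $A_e^\ell$: $\mathcal{L}_{p,k}=\{M^i_{k_i,l_i}\mid1\le i\le e\}$ with $l_i=0$ if $\widehat{i}\cap p(k)=\emptyset$ else $d-1$; $\mathcal{S}_{p,k}$ the same but with $l_i=0$ also when $i=k$. $\mathcal{L}'_{p,k}$ (resp. $\mathcal{S}'_{p,k}$) is the set of indecomposable $A_n^\ell$-modules $X$, with top $S_i$ say, such that some $Y\in\mathcal{L}_{p,k}$ (resp. $\mathcal{S}_{p,k}$) has the same length as $X$ and top $S_a$ with $a\equiv i\pmod e$ (this is the preimage under the covering functor $A_n^\ell$-$\underline{\mathrm{mod}}\to A_e^\ell$-$\underline{\mathrm{mod}}$ induced by quotienting the stable AR quiver by the Nakayama automorphism). $m_1(p)$ is the partition of $\underline{e}$ into orbits of $x\mapsto\overline{k_x+1}$; $m_2(p)$ is the partition into orbits of $x\mapsto\overline{\sigma^{-1}(x)-1}$ where $\sigma(x)=k_x$. *)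

theory Defs
  imports Main "HOL-Library.Disjoint_Sets"
begin

text \<open>Combinatorial model of the stable module category of the Nakayama algebra
  A_m^l = kQ/I (cyclic quiver with m vertices, relations all paths of length l+1).
  An indecomposable module is uniserial and is determined up to isomorphism by its top
  S_i (1 <= i <= m) and its length L (1 <= L <= l+1); we represent it by the pair (i, L).
  It is projective iff L = l+1.\<close>

type_synonym umod = "nat \<times> nat"  (* (index of top, length) *)

definition bar :: "nat \<Rightarrow> int \<Rightarrow> nat" where
  "bar e a = nat ((a - 1) mod int e) + 1"

definition noncrossing :: "nat \<Rightarrow> nat set set \<Rightarrow> bool" where
  "noncrossing e p \<longleftrightarrow> partition_on {1..e} p \<and>
     \<not> (\<exists>B1\<in>p. \<exists>B2\<in>p. B1 \<noteq> B2 \<and>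
          (\<exists>a b x y. a \<in> B1 \<and> b \<in> B1 \<and> x \<in> B2 \<and> y \<in> B2 \<and> a < x \<and> x < b \<and> b < y))"

definition block :: "nat set set \<Rightarrow> nat \<Rightarrow> nat set" where
  "block p i = (THE B. B \<in> p \<and> i \<in> B)"

definition rdist :: "nat \<Rightarrow> nat set set \<Rightarrow> nat \<Rightarrow> nat" where
  "rdist e p i = (LEAST r. 1 \<le> r \<and> bar e (int i - int r) \<in> block p i)"

definition kidx :: "nat \<Rightarrow> nat set set \<Rightarrow> nat \<Rightarrow> nat" where
  "kidx e p i = bar e (int i - int (rdist e p i))"

text \<open>hat i = {i, i+1, ..., k_i} (cyclically, modulo e).\<close>
definition hat :: "nat \<Rightarrow> nat set set \<Rightarrow> nat \<Rightarrow> nat set" where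
  "hat e p i = {bar e (int i + int s) | s. s \<le> e - rdist e p i}"

text \<open>M^i_{j,t} over A_e^l: top S_i, socle S_j, S_i occurring t+1 times.
  Its composition factors are S_i, S_{i+1}, ..., so its length is t*e + ((j-i) mod e) + 1.\<close>
definition Mmod :: "nat \<Rightarrow> nat \<Rightarrow> nat \<Rightarrow> nat \<Rightarrow> umod" where
  "Mmod e i j t = (i, t * e + nat ((int j - int i) mod int e) + 1)"

definition Lset :: "nat \<Rightarrow> nat \<Rightarrow> nat set set \<Rightarrow> nat \<Rightarrow> umod set" where
  "Lset e l p k = {Mmod e i (kidx e p i)
      (if hat e p i \<inter> block p k = {} then 0 else l div e - 1) | i. i \<in> {1..e}}"

definition Sset :: "nat \<Rightarrow> nat \<Rightarrow> nat set set \<Rightarrow> nat \<Rightarrow> umod set" where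
  "Sset e l p k = {Mmod e i (kidx e p i)
      (if hat e p i \<inter> block p k = {} \<or> i = k then 0 else l div e - 1) | i. i \<in> {1..e}}"

text \<open>Preimage under the covering functor A_n^l-stmod \<rightarrow> A_e^l-stmod: indecomposable
  A_n^l-modules X (top S_i, 1 <= i <= n) such that some Y in the given set has the same
  length and top S_a with a \<equiv> i (mod e).\<close>
definition lift :: "nat \<Rightarrow> nat \<Rightarrow> umod set \<Rightarrow> umod set" where
  "lift n e Y = {(i, len). i \<in> {1..n} \<and> (\<exists>a. (a, len) \<in> Y \<and> a mod e = i mod e)}"

definition Lset' :: "nat \<Rightarrow> nat \<Rightarrow> nat set set \<Rightarrow> nat \<Rightarrow> umod set" where
  "Lset' n l p k = lift n (gcd n l) (Lset (gcd n l) l p k)"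

definition Sset' :: "nat \<Rightarrow> nat \<Rightarrow> nat set set \<Rightarrow> nat \<Rightarrow> umod set" where
  "Sset' n l p k = lift n (gcd n l) (Sset (gcd n l) l p k)"

text \<open>Syzygy and cosyzygy of an indecomposable non-projective A_n^l-module (i, L):
  the projective cover P_i has factors S_i, ..., S_{i+l}, so the kernel has top S_{i+L}
  and length l+1-L; the injective envelope I_{i+L-1} has top S_{i+L-1-l}, so the cokernel
  has top S_{i+L-1-l} and length l+1-L.\<close>
definition syz :: "nat \<Rightarrow> nat \<Rightarrow> umod \<Rightarrow> umod" where
  "syz n l X = (bar n (int (fst X) + int (snd X)), l + 1 - snd X)"

definition cosyz :: "nat \<Rightarrow> nat \<Rightarrow> umod \<Rightarrow> umod" where
  "cosyz n l X = (bar n (int (fst X) + int (snd X) - 1 - int l), l + 1 - snd X)"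

text \<open>Elementwise application (projective modules are sent to zero, i.e. dropped).\<close>
definition Omega :: "nat \<Rightarrow> nat \<Rightarrow> umod set \<Rightarrow> umod set" where
  "Omega n l S = syz n l ` {X \<in> S. snd X \<le> l}"

definition Omega_inv :: "nat \<Rightarrow> nat \<Rightarrow> umod set \<Rightarrow> umod set" where
  "Omega_inv n l S = cosyz n l ` {X \<in> S. snd X \<le> l}"

definition orbit_partition :: "nat \<Rightarrow> (nat \<Rightarrow> nat) \<Rightarrow> nat set set" where
  "orbit_partition e f = {{(f ^^ j) x | j. True} | x. x \<in> {1..e}}"

definition m1 :: "nat \<Rightarrow> nat set set \<Rightarrow> nat set set" where
  "m1 e p = orbit_partition e (\<lambda>x. bar e (int (kidx e p x) + 1))"

definition m2 :: "nat \<Rightarrow> nat set set \<Rightarrow> nat set set" where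
  "m2 e p = orbit_partition e (\<lambda>x. bar e (int (inv_into {1..e} (kidx e p) x) - 1))"

end

theory Submission
  imports Defs
begin

definition off :: "nat \<Rightarrow> nat \<Rightarrow> nat \<Rightarrow> nat" where
  "off e a z = nat ((int z - int a) mod int e)"

lemma mod_neg_e: "- e \<le> (x::int) \<Longrightarrow> x < 0 \<Longrightarrow> x mod e = x + e"
proof -
  assume a: "- e \<le> x" "x < 0"
  have "x mod e = (x + e) mod e" by simp
  also have "\<dots> = x + e" using a by (intro mod_pos_pos_trivial) auto
  finally show ?thesis .
qed

context fixes e :: nat assumes epos: "0 < e"
begin

lemma bar_ge1: "1 \<le> bar e x" by (simp add: bar_def)
lemma bar_le: "bar e x \<le> e"
proof -
  have "nat ((x - 1) mod int e) < e" using epos by (simp add: nat_less_iff)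
  then show ?thesis unfolding bar_def by simp
qed
lemma bar_in: "bar e x \<in> {1..e}" using bar_ge1 bar_le by auto

lemma bar_int: "int (bar e x) = (x - 1) mod int e + 1"
  unfolding bar_def using epos by simp

lemma bar_id: "z \<in> {1..e} \<Longrightarrow> bar e (int z) = z"
  unfolding bar_def by (auto simp: mod_pos_pos_trivial)

lemma bar_eq_iff: "bar e x = bar e y \<longleftrightarrow> x mod int e = y mod int e"
proof -
  have "bar e x = bar e y \<longleftrightarrow> int (bar e x) = int (bar e y)" by simp
  also have "\<dots> \<longleftrightarrow> (x - 1) mod int e = (y - 1) mod int e" by (simp add: bar_int)
  also have "\<dots> \<longleftrightarrow> x mod int e = y mod int e"
  proof
    assume "(x - 1) mod int e = (y - 1) mod int e"
    then have "((x - 1) + 1) mod int e = ((y - 1) + 1) mod int e" by (rule mod_add_cong) simp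
    then show "x mod int e = y mod int e" by simp
  next
    assume "x mod int e = y mod int e"
    then show "(x - 1) mod int e = (y - 1) mod int e" by (rule mod_diff_cong) simp
  qed
  finally show ?thesis .
qed

lemma bar_mod: "int (bar e x) mod int e = x mod int e"
proof -
  have "int (bar e x) mod int e = ((x - 1) mod int e + 1) mod int e" by (simp add: bar_int)
  also have "\<dots> = ((x - 1) + 1) mod int e" by (simp add: mod_add_left_eq)
  finally show ?thesis by simp
qed

lemma bar_bar: "bar e (int (bar e x) + y) = bar e (x + y)"
proof -
  have "(int (bar e x) + y) mod int e = (int (bar e x) mod int e + y) mod int e"
    by (simp add: mod_add_left_eq)
  also have "\<dots> = (x mod int e + y) mod int e" by (simp only: bar_mod)
  also have "\<dots> = (x + y) mod int e" by (simp add: mod_add_left_eq)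
  finally show ?thesis unfolding bar_eq_iff .
qed

lemma bar_bar_diff: "bar e (int (bar e x) - y) = bar e (x - y)"
proof -
  have "(int (bar e x) - y) mod int e = (int (bar e x) mod int e - y) mod int e"
    by (simp add: mod_diff_left_eq)
  also have "\<dots> = (x mod int e - y) mod int e" by (simp only: bar_mod)
  also have "\<dots> = (x - y) mod int e" by (simp add: mod_diff_left_eq)
  finally show ?thesis unfolding bar_eq_iff .
qed

lemma bar_shift: "bar e (x + k * int e) = bar e x"
  unfolding bar_eq_iff by simp

lemma bar_eq_nat: "z \<in> {1..e} \<Longrightarrow> bar e x = z \<longleftrightarrow> x mod int e = int z mod int e"
  using bar_eq_iff[of x "int z"] bar_id[of z] by auto

lemma off_lt: "off e a z < e"
  unfolding off_def using epos by (simp add: nat_less_iff)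

lemma off_int: "int (off e a z) = (int z - int a) mod int e"
  unfolding off_def using epos by simp

lemma off_bar: "off e a (bar e x) = nat ((x - int a) mod int e)"
proof -
  have "(int (bar e x) - int a) mod int e = (int (bar e x) mod int e - int a) mod int e"
    by (simp add: mod_diff_left_eq)
  also have "\<dots> = (x mod int e - int a) mod int e" by (simp only: bar_mod)
  also have "\<dots> = (x - int a) mod int e" by (simp add: mod_diff_left_eq)
  finally show ?thesis unfolding off_def by simp
qed

lemma off_bar2: "off e (bar e x) z = nat ((int z - x) mod int e)"
proof -
  have "(int z - int (bar e x)) mod int e = (int z - int (bar e x) mod int e) mod int e"
    by (simp add: mod_diff_right_eq)
  also have "\<dots> = (int z - x mod int e) mod int e" by (simp only: bar_mod)
  also have "\<dots> = (int z - x) mod int e" by (simp add: mod_diff_right_eq)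
  finally show ?thesis unfolding off_def by simp
qed

lemma bar_off: "z \<in> {1..e} \<Longrightarrow> bar e (int a + int (off e a z)) = z"
  by (subst bar_eq_nat) (auto simp: off_int mod_add_right_eq)

lemma off_inj: "z \<in> {1..e} \<Longrightarrow> w \<in> {1..e} \<Longrightarrow> off e a z = off e a w \<Longrightarrow> z = w"
  by (metis bar_off)

lemma off_self: "off e a a = 0" by (simp add: off_def)

lemma off_zero: "z \<in> {1..e} \<Longrightarrow> a \<in> {1..e} \<Longrightarrow> off e a z = 0 \<Longrightarrow> z = a"
  using off_inj[of z a a] off_self by auto

lemma off_bar_add: "0 \<le> c \<Longrightarrow> c < int e \<Longrightarrow> off e a (bar e (int a + c)) = nat c"
  by (simp add: off_bar)

lemma off_bar_sub: "0 < c \<Longrightarrow> c \<le> int e \<Longrightarrow> off e a (bar e (int a - c)) = nat (int e - c)"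
  by (simp add: off_bar mod_neg_e)

lemma off_succ: "off e a (bar e (int w + 1)) = (if off e a w + 1 = e then 0 else off e a w + 1)"
proof -
  have "off e a (bar e (int w + 1)) = nat ((int w + 1 - int a) mod int e)" by (simp add: off_bar)
  also have "(int w + 1 - int a) = (int w - int a) + 1" by simp
  also have "((int w - int a) + 1) mod int e = ((int w - int a) mod int e + 1) mod int e"
    by (simp add: mod_add_left_eq)
  also have "\<dots> = (int (off e a w) + 1) mod int e" by (simp add: off_int)
  finally have h: "off e a (bar e (int w + 1)) = nat ((int (off e a w) + 1) mod int e)" .
  show ?thesis
  proof (cases "off e a w + 1 = e")
    case True then have "int (off e a w) + 1 = int e" by linarith
    then have "(int (off e a w) + 1) mod int e = 0" by simp
    then show ?thesis using h True by simp
  next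
    case False then have "int (off e a w) + 1 < int e" using off_lt[of a w] by linarith
    then show ?thesis using h False by (simp add: mod_pos_pos_trivial)
  qed
qed

lemma off_pred: "off e a (bar e (int w - 1)) = (if off e a w = 0 then e - 1 else off e a w - 1)"
proof -
  have "off e a (bar e (int w - 1)) = nat ((int w - 1 - int a) mod int e)" by (simp add: off_bar)
  also have "(int w - 1 - int a) = (int w - int a) - 1" by simp
  also have "((int w - int a) - 1) mod int e = ((int w - int a) mod int e - 1) mod int e"
    by (simp add: mod_diff_left_eq)
  also have "\<dots> = (int (off e a w) - 1) mod int e" by (simp add: off_int)
  finally have h: "off e a (bar e (int w - 1)) = nat ((int (off e a w) - 1) mod int e)" .
  show ?thesis
  proof (cases "off e a w = 0")
    case True then show ?thesis using h epos by (simp add: mod_neg_e nat_diff_distrib)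
  next
    case False then show ?thesis using h off_lt[of a w] by (simp add: mod_pos_pos_trivial nat_diff_distrib)
  qed
qed

end


context fixes e :: nat assumes epos: "0 < e"
begin

lemma off_minus: "c \<le> off e a w \<Longrightarrow> off e a (bar e (int w - int c)) = off e a w - c"
proof -
  assume c: "c \<le> off e a w"
  have "off e a (bar e (int w - int c)) = nat ((int w - int c - int a) mod int e)" by (simp add: off_bar epos)
  also have "(int w - int c - int a) = (int w - int a) - int c" by simp
  also have "((int w - int a) - int c) mod int e = ((int w - int a) mod int e - int c) mod int e"
    by (simp add: mod_diff_left_eq)
  also have "\<dots> = (int (off e a w) - int c) mod int e" by (simp add: off_int epos)
  also have "\<dots> = int (off e a w) - int c" using c off_lt[OF epos, of a w] by (intro mod_pos_pos_trivial) auto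
  finally show ?thesis using c by simp
qed

lemma off_minus2: "off e a w < c \<Longrightarrow> c \<le> e + off e a w \<Longrightarrow> off e a (bar e (int w - int c)) = off e a w + e - c"
proof -
  assume c: "off e a w < c" "c \<le> e + off e a w"
  have "off e a (bar e (int w - int c)) = nat ((int w - int c - int a) mod int e)" by (simp add: off_bar epos)
  also have "(int w - int c - int a) = (int w - int a) - int c" by simp
  also have "((int w - int a) - int c) mod int e = ((int w - int a) mod int e - int c) mod int e"
    by (simp add: mod_diff_left_eq)
  also have "\<dots> = (int (off e a w) - int c) mod int e" by (simp add: off_int epos)
  also have "\<dots> = int (off e a w) - int c + int e" using c by (intro mod_neg_e) auto
  finally show ?thesis using c by simp
qed

lemma off_plus: "off e a w + c < e \<Longrightarrow> off e a (bar e (int w + int c)) = off e a w + c"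
proof -
  assume c: "off e a w + c < e"
  have "off e a (bar e (int w + int c)) = nat ((int w + int c - int a) mod int e)" by (simp add: off_bar epos)
  also have "(int w + int c - int a) = (int w - int a) + int c" by simp
  also have "((int w - int a) + int c) mod int e = ((int w - int a) mod int e + int c) mod int e"
    by (simp add: mod_add_left_eq)
  also have "\<dots> = (int (off e a w) + int c) mod int e" by (simp add: off_int epos)
  also have "\<dots> = int (off e a w) + int c" using c by (intro mod_pos_pos_trivial) auto
  finally show ?thesis by simp
qed

lemma off_plus2: "e \<le> off e a w + c \<Longrightarrow> c \<le> e \<Longrightarrow> off e a (bar e (int w + int c)) = off e a w + c - e"
proof -
  assume c: "e \<le> off e a w + c" "c \<le> e"
  have "off e a (bar e (int w + int c)) = nat ((int w + int c - int a) mod int e)" by (simp add: off_bar epos)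
  also have "(int w + int c - int a) = (int w - int a) + int c" by simp
  also have "((int w - int a) + int c) mod int e = ((int w - int a) mod int e + int c) mod int e"
    by (simp add: mod_add_left_eq)
  also have "\<dots> = (int (off e a w) + int c) mod int e" by (simp add: off_int epos)
  also have "\<dots> = (int (off e a w) + int c - int e) mod int e" by (simp add: minus_mod_self2)
  also have "\<dots> = int (off e a w) + int c - int e" using c off_lt[OF epos, of a w] by (intro mod_pos_pos_trivial) auto
  finally show ?thesis using c by simp
qed

lemma off_explicit1: "a \<in> {1..e} \<Longrightarrow> z \<in> {1..e} \<Longrightarrow> a \<le> z \<Longrightarrow> int (off e a z) = int z - int a"
  by (simp add: off_int epos mod_pos_pos_trivial)

lemma off_explicit2: "a \<in> {1..e} \<Longrightarrow> z \<in> {1..e} \<Longrightarrow> z < a \<Longrightarrow> int (off e a z) = int z - int a + int e"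
  by (simp add: off_int epos mod_neg_e)

end

definition orb :: "('a \<Rightarrow> 'a) \<Rightarrow> 'a \<Rightarrow> 'a set" where
  "orb f x = {(f ^^ j) x | j. True}"

lemma funpow_in: "f ` T \<subseteq> T \<Longrightarrow> x \<in> T \<Longrightarrow> (f ^^ j) x \<in> T"
  by (induction j) auto

lemma orb_sub: "f ` T \<subseteq> T \<Longrightarrow> x \<in> T \<Longrightarrow> orb f x \<subseteq> T"
proof
  fix y assume "f ` T \<subseteq> T" "x \<in> T" "y \<in> orb f x"
  then show "y \<in> T" unfolding orb_def using funpow_in[of f T x] by auto
qed

lemma orb_self: "x \<in> orb f x"
proof -
  have "x = (f ^^ 0) x" by simp
  then show ?thesis unfolding orb_def by blast
qed

lemma orb_pow: "(f ^^ j) x \<in> orb f x"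
  unfolding orb_def by blast

lemma orb_f: "f x \<in> orb f x"
  using orb_pow[where f=f and j=1 and x=x] by simp

lemma inj_funpow: "f ` T \<subseteq> T \<Longrightarrow> inj_on f T \<Longrightarrow> inj_on (f ^^ j) T"
proof (induction j)
  case 0 then show ?case by simp
next
  case (Suc j)
  have "(f ^^ j) ` T \<subseteq> T" using funpow_in[OF Suc.prems(1)] by blast
  then have "inj_on f ((f ^^ j) ` T)" using Suc.prems(2) inj_on_subset by blast
  moreover have "inj_on (f ^^ j) T" using Suc by blast
  ultimately have "inj_on (f \<circ> (f ^^ j)) T" by (intro comp_inj_on)
  then show ?case by (simp add: comp_def)
qed

lemma period:
  assumes fin: "finite T" and sub: "f ` T \<subseteq> T" and inj: "inj_on f T" and x: "x \<in> T"
  shows "\<exists>N>0. (f ^^ N) x = x"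
proof -
  have "\<not> inj_on (\<lambda>j. (f ^^ j) x) (UNIV :: nat set)"
  proof
    assume "inj_on (\<lambda>j. (f ^^ j) x) (UNIV :: nat set)"
    moreover have "(\<lambda>j. (f ^^ j) x) ` UNIV \<subseteq> T" using funpow_in[OF sub x] by blast
    ultimately have "finite (UNIV :: nat set)"
      using fin finite_imageD finite_subset by blast
    then show False by simp
  qed
  then obtain i j where ij: "i \<noteq> j" "(f ^^ i) x = (f ^^ j) x"
    unfolding inj_on_def by blast
  have main: "\<exists>N>0. (f ^^ N) x = x" if "i < j" "(f ^^ i) x = (f ^^ j) x" for i j
  proof -
    have "(f ^^ (i + (j - i))) x = (f ^^ i) ((f ^^ (j - i)) x)" by (simp add: funpow_add)
    moreover have "i + (j - i) = j" using that(1) by simp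
    ultimately have "(f ^^ j) x = (f ^^ i) ((f ^^ (j - i)) x)" by simp
    then have "(f ^^ i) x = (f ^^ i) ((f ^^ (j - i)) x)" using that by simp
    moreover have "(f ^^ (j - i)) x \<in> T" using funpow_in[OF sub x] .
    ultimately have "x = (f ^^ (j - i)) x"
      using inj_funpow[OF sub inj, of i] x unfolding inj_on_def by blast
    then show ?thesis using that(1) by (intro exI[of _ "j - i"]) auto
  qed
  show ?thesis
  proof (cases "i < j")
    case True then show ?thesis using main ij by blast
  next
    case False then have "j < i" using ij by simp
    then show ?thesis using main ij by metis
  qed
qed

lemma funpow_mult_fix: "(f ^^ N) x = x \<Longrightarrow> (f ^^ (N * k)) x = x"
proof (induction k)
  case 0 then show ?case by simp
next
  case (Suc k)
  have "(f ^^ (N * Suc k)) x = (f ^^ N) ((f ^^ (N * k)) x)"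
    by (simp add: funpow_add)
  then show ?case using Suc by simp
qed

lemma orb_trans: "y \<in> orb f x \<Longrightarrow> orb f y \<subseteq> orb f x"
proof
  fix z assume y: "y \<in> orb f x" and z: "z \<in> orb f y"
  obtain j where j: "y = (f ^^ j) x" using y unfolding orb_def by blast
  obtain k where k: "z = (f ^^ k) y" using z unfolding orb_def by blast
  have "z = (f ^^ (k + j)) x" using j k by (simp add: funpow_add)
  then show "z \<in> orb f x" unfolding orb_def by blast
qed

lemma orb_sym:
  assumes fin: "finite T" and sub: "f ` T \<subseteq> T" and inj: "inj_on f T" and x: "x \<in> T"
    and y: "y \<in> orb f x"
  shows "x \<in> orb f y"
proof -
  obtain j where j: "y = (f ^^ j) x" using y unfolding orb_def by blast
  obtain N where N: "N > 0" "(f ^^ N) x = x" using period[OF fin sub inj x] by blast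
  have h: "1 * j \<le> N * j" by (rule mult_le_mono1) (use N(1) in simp)
  have h2: "N * (j + 1) = N * j + N" by (simp add: algebra_simps)
  have le: "j \<le> N * (j + 1)" using h h2 by linarith
  have "(f ^^ (N * (j + 1) - j)) y = (f ^^ (N * (j + 1) - j + j)) x"
    using j by (simp add: funpow_add)
  also have "N * (j + 1) - j + j = N * (j + 1)" using le by simp
  also have "(f ^^ (N * (j + 1))) x = x" using funpow_mult_fix[OF N(2)] .
  finally show ?thesis using orb_pow by metis
qed

lemma orb_eq:
  assumes "finite T" "f ` T \<subseteq> T" "inj_on f T" "x \<in> T" "y \<in> orb f x"
  shows "orb f y = orb f x"
  using orb_trans[OF assms(5)] orb_trans[OF orb_sym[OF assms]] by blast

lemma orbit_partition_eq: "orbit_partition e f = {orb f x | x. x \<in> {1..e}}"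
  unfolding orbit_partition_def orb_def by simp

lemma block_orbit:
  assumes sub: "f ` {1..e} \<subseteq> {1..e}" and inj: "inj_on f {1..e}" and y: "y \<in> {1..e}"
  shows "block (orbit_partition e f) y = orb f y"
  unfolding block_def orbit_partition_eq
proof (rule the_equality)
  have "orb f y \<in> {orb f x |x. x \<in> {1..e}}" using y by blast
  moreover have "y \<in> orb f y" by (rule orb_self)
  ultimately show "orb f y \<in> {orb f x |x. x \<in> {1..e}} \<and> y \<in> orb f y" by blast
next
  fix B assume "B \<in> {orb f x |x. x \<in> {1..e}} \<and> y \<in> B"
  then obtain x where x: "x \<in> {1..e}" "B = orb f x" "y \<in> orb f x" by blast
  show "B = orb f y" using orb_eq[OF _ sub inj x(1) x(3)] x(2) by simp
qed



locale NC =
  fixes e :: nat and p :: "nat set set"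
  assumes epos: "0 < e" and nc: "noncrossing e p"
begin

abbreviation SS where "SS \<equiv> {1..e}"
abbreviation sg where "sg \<equiv> kidx e p"
abbreviation rr where "rr \<equiv> rdist e p"
abbreviation bl where "bl \<equiv> block p"

lemma part: "partition_on SS p"
  using nc unfolding noncrossing_def by blast

lemma bl_unique: "B \<in> p \<Longrightarrow> x \<in> B \<Longrightarrow> bl x = B"
  unfolding block_def
proof (rule the_equality)
  assume "B \<in> p" "x \<in> B"
  then show "B \<in> p \<and> x \<in> B" by blast
next
  fix B' assume B: "B \<in> p" "x \<in> B" and B': "B' \<in> p \<and> x \<in> B'"
  have "disjoint p" using part by (rule partition_onD2)
  then show "B' = B" using B B' unfolding disjoint_def disjnt_def by blast
qed

lemma bl_in: "x \<in> SS \<Longrightarrow> bl x \<in> p"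
  and bl_mem: "x \<in> SS \<Longrightarrow> x \<in> bl x"
proof -
  assume x: "x \<in> SS"
  have "\<Union>p = SS" using partition_onD1[OF part] by simp
  then obtain B where B: "B \<in> p" "x \<in> B" using x by blast
  then show "bl x \<in> p" "x \<in> bl x" using bl_unique[OF B] by auto
qed

lemma bl_sub: "B \<in> p \<Longrightarrow> B \<subseteq> SS"
  using partition_onD1[OF part] by blast

lemma bl_sub2: "x \<in> SS \<Longrightarrow> bl x \<subseteq> SS"
  using bl_sub bl_in by blast

lemma bl_eq: "x \<in> SS \<Longrightarrow> y \<in> bl x \<Longrightarrow> bl y = bl x"
  using bl_unique bl_in by blast

lemma rr_props:
  assumes x: "x \<in> SS"
  shows "1 \<le> rr x" "rr x \<le> e" "bar e (int x - int (rr x)) \<in> bl x"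
proof -
  let ?P = "\<lambda>r. 1 \<le> r \<and> bar e (int x - int r) \<in> bl x"
  have "bar e (int x - int e) = bar e (int x)" using bar_shift[OF epos, of "int x" "-1"] by simp
  also have "\<dots> = x" using bar_id[OF epos x] .
  finally have Pe: "?P e" using epos bl_mem[OF x] by simp
  have "?P (rr x)" unfolding rdist_def by (rule LeastI[of ?P, OF Pe])
  then show "1 \<le> rr x" "bar e (int x - int (rr x)) \<in> bl x" by auto
  show "rr x \<le> e" unfolding rdist_def by (rule Least_le[of ?P, OF Pe])
qed

lemma rr_min: "1 \<le> s \<Longrightarrow> s < rr x \<Longrightarrow> bar e (int x - int s) \<notin> bl x"
  unfolding rdist_def using not_less_Least by blast

lemma sg_eq: "sg x = bar e (int x - int (rr x))"
  by (simp add: kidx_def)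

lemma sg_in: "x \<in> SS \<Longrightarrow> sg x \<in> SS"
  using sg_eq bar_in[OF epos] by simp

lemma sg_bl: "x \<in> SS \<Longrightarrow> sg x \<in> bl x"
  using sg_eq rr_props by simp

lemma bl_sg: "x \<in> SS \<Longrightarrow> bl (sg x) = bl x"
  using bl_eq sg_bl by blast

lemma off_sg: "x \<in> SS \<Longrightarrow> off e x (sg x) = e - rr x"
proof -
  assume x: "x \<in> SS"
  have "off e x (sg x) = off e x (bar e (int x - int (rr x)))" by (simp add: sg_eq)
  also have "\<dots> = off e x x + e - rr x"
  proof (cases "rr x = e")
    case True
    have "bar e (int x - int (rr x)) = x"
      using True bar_shift[OF epos, of "int x" "-1"] bar_id[OF epos x] by simp
    then show ?thesis using True by (simp add: off_self[OF epos])
  next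
    case False
    then show ?thesis using rr_props[OF x] off_self[OF epos, of x]
      by (intro off_minus2[OF epos]) auto
  qed
  finally show ?thesis by (simp add: off_self[OF epos])
qed

lemma blk_off:
  assumes x: "x \<in> SS" and w: "w \<in> bl x"
  shows "off e x w \<le> e - rr x"
proof (rule ccontr)
  assume "\<not> off e x w \<le> e - rr x"
  then have o: "e - rr x < off e x w" by simp
  have wS: "w \<in> SS" using bl_sub2[OF x] w by blast
  let ?o = "off e x w"
  have ol: "?o < e" by (rule off_lt[OF epos])
  define s where "s = e - ?o"
  have s1: "1 \<le> s" "s < rr x" using o ol rr_props[OF x] unfolding s_def by auto
  have eq: "int x - int s = (int x + int ?o) + (-1) * int e" using ol unfolding s_def by simp
  have "bar e (int x - int s) = bar e ((int x + int ?o) + (-1) * int e)" by (simp only: eq)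
  also have "\<dots> = bar e (int x + int ?o)" by (rule bar_shift[OF epos])
  also have "\<dots> = w" by (rule bar_off[OF epos wS])
  finally show False using rr_min[OF s1] w by simp
qed

lemma gap_notin: "x \<in> SS \<Longrightarrow> e - rr x < off e x w \<Longrightarrow> w \<notin> bl x"
  using blk_off by fastforce

lemma sg_inj_aux:
  assumes i: "i \<in> SS" and j: "j \<in> SS" and eq: "sg i = sg j" and lt: "rr i < rr j"
  shows False
proof -
  have "bl i = bl j" using bl_sg[OF i] bl_sg[OF j] eq by simp
  then have ij: "i \<in> bl j" using bl_mem[OF i] by simp
  have "bar e (int (sg i) + int (rr i)) = bar e (int i - int (rr i) + int (rr i))"
    unfolding sg_eq by (rule bar_bar[OF epos])
  also have "\<dots> = i" using bar_id[OF epos i] by simp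
  finally have 1: "bar e (int (sg j) + int (rr i)) = i" using eq by simp
  have "bar e (int (sg j) + int (rr i)) = bar e (int j - int (rr j) + int (rr i))"
    unfolding sg_eq by (rule bar_bar[OF epos])
  also have "int j - int (rr j) + int (rr i) = int j - int (rr j - rr i)" using lt by simp
  finally have "bar e (int j - int (rr j - rr i)) = i" using 1 by simp
  moreover have "1 \<le> rr j - rr i" "rr j - rr i < rr j" using lt rr_props[OF i] by auto
  ultimately show False using rr_min ij by metis
qed

lemma sg_inj: "inj_on sg SS"
proof (rule inj_onI)
  fix i j assume i: "i \<in> SS" and j: "j \<in> SS" and eq: "sg i = sg j"
  have "rr i = rr j" using sg_inj_aux[OF i j eq] sg_inj_aux[OF j i eq[symmetric]] by fastforce
  have "i = bar e (int (sg i) + int (rr i))"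
    using bar_bar[OF epos, of "int i - int (rr i)" "int (rr i)"] bar_id[OF epos i] by (simp add: sg_eq)
  also have "\<dots> = bar e (int (sg j) + int (rr j))" using eq \<open>rr i = rr j\<close> by simp
  also have "\<dots> = j"
    using bar_bar[OF epos, of "int j - int (rr j)" "int (rr j)"] bar_id[OF epos j] by (simp add: sg_eq)
  finally show "i = j" .
qed

lemma sg_maps: "sg ` SS \<subseteq> SS" using sg_in by blast

lemma sg_surj: "sg ` SS = SS"
  using endo_inj_surj[OF _ sg_maps sg_inj] by simp

lemma nc_rule:
  assumes "B1 \<in> p" "B2 \<in> p" "B1 \<noteq> B2" "a \<in> B1" "b \<in> B1" "x \<in> B2" "y \<in> B2"
    "a < x" "x < b" "b < y"
  shows False
proof -
  have n: "\<not> (\<exists>B1\<in>p. \<exists>B2\<in>p. B1 \<noteq> B2 \<and>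
          (\<exists>a b x y. a \<in> B1 \<and> b \<in> B1 \<and> x \<in> B2 \<and> y \<in> B2 \<and> a < x \<and> x < b \<and> b < y))"
    using nc unfolding noncrossing_def by (rule conjunct2)
  have ex: "\<exists>a b x y. a \<in> B1 \<and> b \<in> B1 \<and> x \<in> B2 \<and> y \<in> B2 \<and> a < x \<and> x < b \<and> b < y"
    by (rule exI[of _ a], rule exI[of _ b], rule exI[of _ x], rule exI[of _ y]) (simp add: assms)
  have "\<exists>B1\<in>p. \<exists>B2\<in>p. B1 \<noteq> B2 \<and>
          (\<exists>a b x y. a \<in> B1 \<and> b \<in> B1 \<and> x \<in> B2 \<and> y \<in> B2 \<and> a < x \<and> x < b \<and> b < y)"
    apply (rule bexI[of _ B1], rule bexI[of _ B2])
    using ex assms(1-3) by simp_all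
  then show False using n by contradiction
qed

lemma cross:
  assumes u: "u1 \<in> SS" "u2 \<in> SS" "u3 \<in> SS" "u4 \<in> SS"
    and B: "bl u1 \<noteq> bl u2" "u3 \<in> bl u1" "u4 \<in> bl u2"
    and o: "0 < off e u1 u2" "off e u1 u2 < off e u1 u3" "off e u1 u3 < off e u1 u4"
  shows False
proof -
  have B1: "bl u1 \<in> p" "u1 \<in> bl u1" using bl_in bl_mem u by auto
  have B2: "bl u2 \<in> p" "u2 \<in> bl u2" using bl_in bl_mem u by auto
  have h1: "u1 < u2 \<Longrightarrow> u2 < u3 \<Longrightarrow> u3 < u4 \<Longrightarrow> False"
    by (rule nc_rule[OF B1(1) B2(1) B(1) B1(2) B(2) B2(2) B(3)])
  have h2: "u2 < u3 \<Longrightarrow> u3 < u4 \<Longrightarrow> u4 < u1 \<Longrightarrow> False"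
    by (rule nc_rule[OF B2(1) B1(1) B(1)[symmetric] B2(2) B(3) B(2) B1(2)])
  have h3: "u3 < u4 \<Longrightarrow> u4 < u1 \<Longrightarrow> u1 < u2 \<Longrightarrow> False"
    by (rule nc_rule[OF B1(1) B2(1) B(1) B(2) B1(2) B(3) B2(2)])
  have h4: "u4 < u1 \<Longrightarrow> u1 < u2 \<Longrightarrow> u2 < u3 \<Longrightarrow> False"
    by (rule nc_rule[OF B2(1) B1(1) B(1)[symmetric] B(3) B2(2) B1(2) B(2)])
  have E: "\<And>z. z \<in> SS \<Longrightarrow> (u1 \<le> z \<longrightarrow> int (off e u1 z) = int z - int u1) \<and> (z < u1 \<longrightarrow> int (off e u1 z) = int z - int u1 + int e)"
    using off_explicit1[OF epos u(1)] off_explicit2[OF epos u(1)] by blast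
  note e2 = E[OF u(2)] and e3 = E[OF u(3)] and e4 = E[OF u(4)]
  have o': "0 < int (off e u1 u2)" "int (off e u1 u2) < int (off e u1 u3)" "int (off e u1 u3) < int (off e u1 u4)"
    using o by auto
  have "int (off e u1 u4) < int e" using off_lt[OF epos] by simp
  moreover have bd: "1 \<le> u2" "1 \<le> u3" "1 \<le> u4" "u2 \<le> e" "u3 \<le> e" "u4 \<le> e" using u by auto
  ultimately have L: "int (off e u1 u4) < int e" and bd': "1 \<le> u2" "1 \<le> u3" "1 \<le> u4" "u2 \<le> e" "u3 \<le> e" "u4 \<le> e" by auto
  consider "u1 \<le> u2" "u1 \<le> u3" "u1 \<le> u4" | "u1 \<le> u2" "u1 \<le> u3" "u4 < u1"
    | "u1 \<le> u2" "u3 < u1" "u1 \<le> u4" | "u1 \<le> u2" "u3 < u1" "u4 < u1"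
    | "u2 < u1" "u1 \<le> u3" "u1 \<le> u4" | "u2 < u1" "u1 \<le> u3" "u4 < u1"
    | "u2 < u1" "u3 < u1" "u1 \<le> u4" | "u2 < u1" "u3 < u1" "u4 < u1" by linarith
  then show False
  proof cases
    case 1 then show ?thesis using e2 e3 e4 o' by (intro h1) auto
  next
    case 2 then show ?thesis using e2 e3 e4 o' by (intro h4) auto
  next
    case 3 then show ?thesis using e2 e3 e4 o' L bd' by auto
  next
    case 4 then show ?thesis using e2 e3 e4 o' by (intro h3) auto
  next
    case 5 then show ?thesis using e2 e3 e4 o' L bd' by auto
  next
    case 6 then show ?thesis using e2 e3 e4 o' L bd' by auto
  next
    case 7 then show ?thesis using e2 e3 e4 o' L bd' by auto
  next
    case 8 then show ?thesis using e2 e3 e4 o' by (intro h2) auto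
  qed
qed

end


context NC begin

lemma sg_plus_rr: "a \<in> SS \<Longrightarrow> bar e (int (sg a) + int (rr a)) = a"
  using bar_bar[OF epos, of "int a - int (rr a)" "int (rr a)"] bar_id[OF epos] by (simp add: sg_eq)

lemma sg_alt: "sg a = bar e (int a + (int e - int (rr a)))"
proof -
  have "sg a = bar e ((int a + (int e - int (rr a))) + (-1) * int e)" by (simp add: sg_eq)
  also have "\<dots> = bar e (int a + (int e - int (rr a)))" by (rule bar_shift[OF epos])
  finally show ?thesis .
qed

lemma I1:
  assumes a: "a \<in> SS" and q: "q \<in> SS" and o: "1 \<le> off e a q" "off e a q \<le> e - rr a"
  shows "off e a (sg q) < e - rr a"
proof (cases "q \<in> bl a")
  case True
  have blq: "bl q = bl a" using bl_eq[OF a True] .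
  let ?o = "off e a q"
  have "(int q - int ?o) mod int e = (int q - (int q - int a) mod int e) mod int e"
    by (simp add: off_int[OF epos])
  also have "\<dots> = (int q - (int q - int a)) mod int e" by (rule mod_diff_right_eq)
  also have "\<dots> = int a mod int e" by simp
  finally have "bar e (int q - int ?o) = a" using bar_eq_nat[OF epos a] by simp
  then have "rr q \<le> ?o" using rr_min[of ?o q] o bl_mem[OF a] blq by force
  then have "off e a (sg q) = ?o - rr q" unfolding sg_eq by (rule off_minus[OF epos])
  then show ?thesis using rr_props[OF q] o by simp
next
  case False
  show ?thesis
  proof (rule ccontr)
    assume c: "\<not> off e a (sg q) < e - rr a"
    have ne: "bl a \<noteq> bl q" using False bl_mem[OF q] by auto
    have "sg q \<noteq> sg a" using bl_sg[OF a] bl_sg[OF q] ne by metis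
    then have "off e a (sg q) \<noteq> e - rr a" using off_inj[OF epos sg_in[OF q] sg_in[OF a]] off_sg[OF a] by metis
    then have c2: "e - rr a < off e a (sg q)" using c by simp
    have "q \<noteq> sg a" using False sg_bl[OF a] by auto
    then have "off e a q \<noteq> e - rr a" using off_inj[OF epos q sg_in[OF a]] off_sg[OF a] by metis
    then have c3: "off e a q < e - rr a" using o by simp
    show False
      by (rule cross[of a q "sg a" "sg q"])
         (use a q sg_in sg_bl ne o c2 c3 off_sg[OF a] in auto)
  qed
qed

lemma gap:
  assumes a: "a \<in> SS" and q: "q \<in> SS" and o: "e - rr a < off e a q" and w: "w \<in> bl q"
  shows "e - rr a < off e a w"
proof (rule ccontr)
  assume c: "\<not> e - rr a < off e a w"
  have qa: "q \<notin> bl a" using gap_notin[OF a o] .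
  have wS: "w \<in> SS" using bl_sub2[OF q] w by blast
  have blw: "bl w = bl q" using bl_eq[OF q w] .
  have ne: "bl a \<noteq> bl w" using qa bl_mem[OF q] blw by auto
  have "w \<noteq> a" using ne by auto
  then have c1: "0 < off e a w" using off_zero[OF epos wS a] by fastforce
  have "w \<noteq> sg a" using ne bl_sg[OF a] by auto
  then have "off e a w \<noteq> e - rr a" using off_inj[OF epos wS sg_in[OF a]] off_sg[OF a] by metis
  then have c2: "off e a w < e - rr a" using c by simp
  show False
    by (rule cross[of a w "sg a" q]) (use a q wS sg_in sg_bl ne c1 c2 o off_sg[OF a] blw bl_mem[OF q] in auto)
qed

lemma I2:
  assumes a: "a \<in> SS" and q: "q \<in> SS" and o: "off e a q = 0 \<or> e - rr a < off e a q"
  shows "e - rr a \<le> off e a (sg q)"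
proof (cases "off e a q = 0")
  case True then have "q = a" using off_zero[OF epos q a] by simp
  then show ?thesis using off_sg[OF a] by simp
next
  case False then show ?thesis using gap[OF a q _ sg_bl[OF q]] o by fastforce
qed

definition ff where "ff x = bar e (int (sg x) + 1)"
definition gg where "gg x = bar e (int (inv_into SS sg x) - 1)"

lemma m1_eq: "m1 e p = orbit_partition e ff"
  unfolding m1_def ff_def[abs_def] ..

lemma m2_eq: "m2 e p = orbit_partition e gg"
  unfolding m2_def gg_def[abs_def] ..

lemma bar_cancel:
  assumes z: "z \<in> SS" and w: "w \<in> SS" and eq: "bar e (int z + c) = bar e (int w + c)"
  shows "z = w"
proof -
  have "z = bar e (int (bar e (int z + c)) - c)" using bar_bar_diff[OF epos] bar_id[OF epos z] by simp
  also have "\<dots> = bar e (int (bar e (int w + c)) - c)" using eq by simp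
  also have "\<dots> = w" using bar_bar_diff[OF epos] bar_id[OF epos w] by simp
  finally show ?thesis .
qed

lemma ff_in: "ff x \<in> SS" unfolding ff_def using bar_in[OF epos] by blast
lemma gg_in: "gg x \<in> SS" unfolding gg_def using bar_in[OF epos] by blast
lemma ff_maps: "ff ` SS \<subseteq> SS" using ff_in by blast
lemma gg_maps: "gg ` SS \<subseteq> SS" using gg_in by blast

lemma ff_inj: "inj_on ff SS"
proof (rule inj_onI)
  fix x y assume x: "x \<in> SS" and y: "y \<in> SS" and "ff x = ff y"
  then have "sg x = sg y" using bar_cancel[OF sg_in[OF x] sg_in[OF y]] unfolding ff_def by blast
  then show "x = y" using sg_inj x y unfolding inj_on_def by blast
qed

lemma inv_in: "y \<in> SS \<Longrightarrow> inv_into SS sg y \<in> SS"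
  using inv_into_into[of y sg SS] sg_surj by simp

lemma sg_inv: "y \<in> SS \<Longrightarrow> sg (inv_into SS sg y) = y"
  using f_inv_into_f[of y sg SS] sg_surj by simp

lemma inv_sg: "x \<in> SS \<Longrightarrow> inv_into SS sg (sg x) = x"
  using inv_into_f_f[OF sg_inj] by simp

lemma gg_inj: "inj_on gg SS"
proof (rule inj_onI)
  fix x y assume x: "x \<in> SS" and y: "y \<in> SS" and "gg x = gg y"
  then have "inv_into SS sg x = inv_into SS sg y"
    using bar_cancel[OF inv_in[OF x] inv_in[OF y], of "-1"] unfolding gg_def by simp
  then show "x = y" using sg_inv x y by metis
qed

lemma gg_sg: "a \<in> SS \<Longrightarrow> gg (sg a) = bar e (int a - 1)"
  unfolding gg_def using inv_sg by simp

definition inJ where "inJ a z \<longleftrightarrow> 1 \<le> off e a z \<and> off e a z \<le> e - rr a"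
definition inC where "inC a z \<longleftrightarrow> off e a z = 0 \<or> e - rr a < off e a z"
definition inJ' where "inJ' a z \<longleftrightarrow> off e a z < e - rr a"
definition inC' where "inC' a z \<longleftrightarrow> e - rr a \<le> off e a z"

lemma JC: "inJ a z \<longleftrightarrow> \<not> inC a z" unfolding inJ_def inC_def by auto
lemma JC': "inJ' a z \<longleftrightarrow> \<not> inC' a z" unfolding inJ'_def inC'_def by auto

lemma ff_J: "a \<in> SS \<Longrightarrow> z \<in> SS \<Longrightarrow> inJ a z \<Longrightarrow> inJ a (ff z)"
proof -
  assume a: "a \<in> SS" and z: "z \<in> SS" and j: "inJ a z"
  have h: "off e a (sg z) < e - rr a" using I1[OF a z] j unfolding inJ_def by blast
  have "off e a (sg z) + 1 < e" using h rr_props[OF a] by linarith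
  then have "off e a (ff z) = off e a (sg z) + 1"
    unfolding ff_def using off_plus[OF epos, of a "sg z" 1] by simp
  then show ?thesis using h unfolding inJ_def by simp
qed

lemma ff_C: "a \<in> SS \<Longrightarrow> z \<in> SS \<Longrightarrow> inC a z \<Longrightarrow> inC a (ff z)"
proof -
  assume a: "a \<in> SS" and z: "z \<in> SS" and c: "inC a z"
  have h: "e - rr a \<le> off e a (sg z)" using I2[OF a z] c unfolding inC_def by blast
  show ?thesis
  proof (cases "off e a (sg z) + 1 < e")
    case True
    then have "off e a (ff z) = off e a (sg z) + 1"
      unfolding ff_def using off_plus[OF epos, of a "sg z" 1] by simp
    then show ?thesis using h unfolding inC_def by simp
  next
    case False
    then have "off e a (ff z) = off e a (sg z) + 1 - e"
      unfolding ff_def using off_plus2[OF epos, of a "sg z" 1] epos by simp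
    then show ?thesis using False off_lt[OF epos, of a "sg z"] unfolding inC_def by simp
  qed
qed

lemma gg_J': "a \<in> SS \<Longrightarrow> y \<in> SS \<Longrightarrow> inJ' a y \<Longrightarrow> inJ' a (gg y)"
proof -
  assume a: "a \<in> SS" and y: "y \<in> SS" and j: "inJ' a y"
  let ?z = "inv_into SS sg y"
  have z: "?z \<in> SS" and sz: "sg ?z = y" using inv_in[OF y] sg_inv[OF y] by auto
  have "inJ a ?z"
  proof (rule ccontr)
    assume "\<not> inJ a ?z"
    then have "inC a ?z" using JC by blast
    then have "e - rr a \<le> off e a y" using I2[OF a z] sz unfolding inC_def by metis
    then show False using j unfolding inJ'_def by simp
  qed
  then have h: "1 \<le> off e a ?z" "off e a ?z \<le> e - rr a" unfolding inJ_def by auto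
  then have "off e a (gg y) = off e a ?z - 1"
    unfolding gg_def using off_minus[OF epos, of 1 a ?z] by simp
  then show ?thesis using h unfolding inJ'_def by simp
qed

lemma gg_C': "a \<in> SS \<Longrightarrow> y \<in> SS \<Longrightarrow> inC' a y \<Longrightarrow> inC' a (gg y)"
proof -
  assume a: "a \<in> SS" and y: "y \<in> SS" and c: "inC' a y"
  let ?z = "inv_into SS sg y"
  have z: "?z \<in> SS" and sz: "sg ?z = y" using inv_in[OF y] sg_inv[OF y] by auto
  have "inC a ?z"
  proof (rule ccontr)
    assume "\<not> inC a ?z"
    then have "inJ a ?z" using JC by blast
    then have "off e a y < e - rr a" using I1[OF a z] sz unfolding inJ_def by metis
    then show False using c unfolding inC'_def by simp
  qed
  then consider "off e a ?z = 0" | "e - rr a < off e a ?z" unfolding inC_def by auto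
  then show ?thesis
  proof cases
    case 1
    then have "off e a (gg y) = 0 + e - 1"
      unfolding gg_def using off_minus2[OF epos, of a ?z 1] epos by simp
    then show ?thesis using rr_props[OF a] unfolding inC'_def by simp
  next
    case 2
    then have "off e a (gg y) = off e a ?z - 1"
      unfolding gg_def using off_minus[OF epos, of 1 a ?z] by simp
    then show ?thesis using 2 unfolding inC'_def by simp
  qed
qed

end


lemma rdist_eqI:
  assumes "1 \<le> r0" "bar e (int y - int r0) \<in> block P y"
    "\<And>s. 1 \<le> s \<Longrightarrow> s < r0 \<Longrightarrow> bar e (int y - int s) \<notin> block P y"
  shows "rdist e P y = r0"
  unfolding rdist_def
proof (rule Least_equality)
  show "1 \<le> r0 \<and> bar e (int y - int r0) \<in> block P y" using assms by blast
next
  fix s assume "1 \<le> s \<and> bar e (int y - int s) \<in> block P y"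
  then show "r0 \<le> s" using assms(3) by (meson not_le)
qed

context NC begin

abbreviation Q where "Q \<equiv> m1 e p"
abbreviation R where "R \<equiv> m2 e p"

lemma finS: "finite SS" by simp

lemma blockQ: "y \<in> SS \<Longrightarrow> block Q y = orb ff y"
  unfolding m1_eq by (rule block_orbit[OF ff_maps ff_inj])

lemma blockR: "y \<in> SS \<Longrightarrow> block R y = orb gg y"
  unfolding m2_eq by (rule block_orbit[OF gg_maps gg_inj])

lemma ff_alt: "ff a = bar e (int a + (int e + 1 - int (rr a)))"
proof -
  have "ff a = bar e (int a + (int e - int (rr a)) + 1)" unfolding ff_def sg_alt by (rule bar_bar[OF epos])
  then show ?thesis by (simp add: algebra_simps)
qed

lemma bar_a_e: "a \<in> SS \<Longrightarrow> bar e (int a + int e) = a"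
  using bar_shift[OF epos, of "int a" 1] bar_id[OF epos] by simp

lemma hat_p: "a \<in> SS \<Longrightarrow> hat e p a = {z \<in> SS. off e a z \<le> e - rr a}"
proof -
  assume a: "a \<in> SS"
  show ?thesis
  proof (rule set_eqI, rule iffI)
    fix z assume "z \<in> hat e p a"
    then obtain s where s: "s \<le> e - rr a" "z = bar e (int a + int s)" unfolding hat_def by blast
    have "s < e" using s(1) rr_props[OF a] by linarith
    then have "off e a z = s" using s(2) off_bar_add[OF epos, of "int s" a] by simp
    then show "z \<in> {z \<in> SS. off e a z \<le> e - rr a}" using s bar_in[OF epos] by simp
  next
    fix z assume z: "z \<in> {z \<in> SS. off e a z \<le> e - rr a}"
    then have "z = bar e (int a + int (off e a z))" using bar_off[OF epos] by simp
    then show "z \<in> hat e p a" unfolding hat_def using z by blast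
  qed
qed

lemma ff_a_C: "a \<in> SS \<Longrightarrow> inC a (ff a)"
  using ff_C[of a a] off_self[OF epos, of a] unfolding inC_def by simp

lemma sg_a_C': "a \<in> SS \<Longrightarrow> inC' a (sg a)"
  using off_sg unfolding inC'_def by simp

lemma orb_ff_C: "a \<in> SS \<Longrightarrow> z \<in> SS \<Longrightarrow> inC a z \<Longrightarrow> orb ff z \<subseteq> {w \<in> SS. inC a w}"
  by (rule orb_sub) (use ff_C ff_in in auto)

lemma orb_ff_J: "a \<in> SS \<Longrightarrow> z \<in> SS \<Longrightarrow> inJ a z \<Longrightarrow> orb ff z \<subseteq> {w \<in> SS. inJ a w}"
  by (rule orb_sub) (use ff_J ff_in in auto)

lemma orb_gg_C': "a \<in> SS \<Longrightarrow> z \<in> SS \<Longrightarrow> inC' a z \<Longrightarrow> orb gg z \<subseteq> {w \<in> SS. inC' a w}"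
  by (rule orb_sub) (use gg_C' gg_in in auto)

lemma orb_gg_J': "a \<in> SS \<Longrightarrow> z \<in> SS \<Longrightarrow> inJ' a z \<Longrightarrow> orb gg z \<subseteq> {w \<in> SS. inJ' a w}"
  by (rule orb_sub) (use gg_J' gg_in in auto)

lemma rdistQ: assumes a: "a \<in> SS" shows "rdist e Q (ff a) = e + 1 - rr a"
proof (rule rdist_eqI)
  have r: "1 \<le> rr a" "rr a \<le> e" using rr_props[OF a] by auto
  show "1 \<le> e + 1 - rr a" using r by simp
  have "bar e (int (ff a) - int (e + 1 - rr a)) = bar e (int a + (int e + 1 - int (rr a)) - int (e + 1 - rr a))"
    unfolding ff_alt by (rule bar_bar_diff[OF epos])
  also have "\<dots> = a" using r bar_id[OF epos a] by simp
  finally have 1: "bar e (int (ff a) - int (e + 1 - rr a)) = a" .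
  have "a \<in> orb ff (ff a)" by (rule orb_sym[OF finS ff_maps ff_inj a orb_f])
  then show "bar e (int (ff a) - int (e + 1 - rr a)) \<in> block Q (ff a)" using 1 blockQ[OF ff_in] by simp
  fix s assume s: "1 \<le> s" "s < e + 1 - rr a"
  have "bar e (int (ff a) - int s) = bar e (int a + (int e + 1 - int (rr a)) - int s)"
    unfolding ff_alt by (rule bar_bar_diff[OF epos])
  also have "\<dots> = bar e (int a + (int e + 1 - int (rr a) - int s))" by (simp add: algebra_simps)
  finally have eq: "bar e (int (ff a) - int s) = bar e (int a + (int e + 1 - int (rr a) - int s))" .
  have "off e a (bar e (int (ff a) - int s)) = nat (int e + 1 - int (rr a) - int s)"
    unfolding eq using s r by (intro off_bar_add[OF epos]) auto
  then have "inJ a (bar e (int (ff a) - int s))" unfolding inJ_def using s r by auto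
  moreover have "orb ff (ff a) \<subseteq> {w \<in> SS. inC a w}" using orb_ff_C[OF a ff_in ff_a_C[OF a]] .
  ultimately show "bar e (int (ff a) - int s) \<notin> block Q (ff a)" using blockQ[OF ff_in] JC by blast
qed

lemma kidxQ: "a \<in> SS \<Longrightarrow> kidx e Q (ff a) = a"
proof -
  assume a: "a \<in> SS"
  have r: "1 \<le> rr a" "rr a \<le> e" using rr_props[OF a] by auto
  have "kidx e Q (ff a) = bar e (int (ff a) - int (e + 1 - rr a))"
    unfolding kidx_def rdistQ[OF a] ..
  also have "\<dots> = bar e (int a + (int e + 1 - int (rr a)) - int (e + 1 - rr a))"
    by (subst ff_alt, rule bar_bar_diff[OF epos])
  also have "\<dots> = a" using r bar_id[OF epos a] by simp
  finally show ?thesis .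
qed

lemma hatQ: assumes a: "a \<in> SS" shows "hat e Q (ff a) = {z \<in> SS. inC a z}"
proof (rule set_eqI, rule iffI)
  have r: "1 \<le> rr a" "rr a \<le> e" using rr_props[OF a] by auto
  fix z assume "z \<in> hat e Q (ff a)"
  then obtain s where s: "s \<le> e - rdist e Q (ff a)" "z = bar e (int (ff a) + int s)" unfolding hat_def by blast
  have s': "s \<le> rr a - 1" using s(1) rdistQ[OF a] r by simp
  have "z = bar e (int a + (int e + 1 - int (rr a)) + int s)" unfolding s ff_alt by (rule bar_bar[OF epos])
  also have "\<dots> = bar e (int a + (int e + 1 - int (rr a) + int s))" by (simp add: algebra_simps)
  finally have z: "z = bar e (int a + (int e + 1 - int (rr a) + int s))" .
  show "z \<in> {z \<in> SS. inC a z}"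
  proof (cases "s = rr a - 1")
    case True
    then have "z = a" using z r bar_a_e[OF a] by simp
    then show ?thesis using a off_self[OF epos, of a] unfolding inC_def by simp
  next
    case False
    then have "off e a z = nat (int e + 1 - int (rr a) + int s)"
      unfolding z using s' r by (intro off_bar_add[OF epos]) auto
    then show ?thesis using bar_in[OF epos] z s' r False unfolding inC_def by auto
  qed
next
  have r: "1 \<le> rr a" "rr a \<le> e" using rr_props[OF a] by auto
  fix z assume zz: "z \<in> {z \<in> SS. inC a z}"
  then have z: "z \<in> SS" "off e a z = 0 \<or> e - rr a < off e a z" unfolding inC_def by auto
  have eqh: "hat e Q (ff a) = {bar e (int (ff a) + int s) | s. s \<le> rr a - 1}"
    unfolding hat_def rdistQ[OF a] using r by simp
  have gen: "bar e (int (ff a) + int s) = bar e (int a + (int e + 1 - int (rr a) + int s))" for s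
  proof -
    have "bar e (int (ff a) + int s) = bar e (int a + (int e + 1 - int (rr a)) + int s)"
      unfolding ff_alt by (rule bar_bar[OF epos])
    then show ?thesis by (simp add: algebra_simps)
  qed
  show "z \<in> hat e Q (ff a)"
  proof (cases "off e a z = 0")
    case True
    then have "z = a" using off_zero[OF epos z(1) a] by simp
    moreover have "bar e (int (ff a) + int (rr a - 1)) = a"
    proof -
      have "bar e (int (ff a) + int (rr a - 1)) = bar e (int a + (int e + 1 - int (rr a) + int (rr a - 1)))"
        by (rule gen)
      also have "int e + 1 - int (rr a) + int (rr a - 1) = int e" using r by simp
      finally show ?thesis using bar_a_e[OF a] by simp
    qed
    ultimately show ?thesis unfolding eqh by (intro CollectI exI[of _ "rr a - 1"]) auto
  next
    case False
    then have o: "e - rr a < off e a z" using z by simp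
    have ol: "off e a z < e" by (rule off_lt[OF epos])
    define s where "s = off e a z - (e + 1 - rr a)"
    have "s \<le> rr a - 1" using ol unfolding s_def by simp
    moreover have "bar e (int (ff a) + int s) = z"
      using gen[of s] o r bar_off[OF epos z(1), of a] unfolding s_def by (simp add: of_nat_diff)
    ultimately show ?thesis unfolding eqh by blast
  qed
qed

lemma rdistR: assumes a: "a \<in> SS" shows "rdist e R (sg a) = e + 1 - rr a"
proof (rule rdist_eqI)
  have r: "1 \<le> rr a" "rr a \<le> e" using rr_props[OF a] by auto
  show "1 \<le> e + 1 - rr a" using r by simp
  have "bar e (int (sg a) - int (e + 1 - rr a)) = bar e (int a + (int e - int (rr a)) - int (e + 1 - rr a))"
    unfolding sg_alt by (rule bar_bar_diff[OF epos])
  also have "int a + (int e - int (rr a)) - int (e + 1 - rr a) = int a - 1" using r by simp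
  also have "bar e (int a - 1) = gg (sg a)" using gg_sg[OF a] by simp
  finally have 1: "bar e (int (sg a) - int (e + 1 - rr a)) = gg (sg a)" .
  then show "bar e (int (sg a) - int (e + 1 - rr a)) \<in> block R (sg a)"
    using blockR[OF sg_in[OF a]] orb_f by simp
  fix s assume s: "1 \<le> s" "s < e + 1 - rr a"
  have "bar e (int (sg a) - int s) = bar e (int a + (int e - int (rr a)) - int s)"
    unfolding sg_alt by (rule bar_bar_diff[OF epos])
  also have "\<dots> = bar e (int a + (int e - int (rr a) - int s))" by (simp add: algebra_simps)
  finally have eq: "bar e (int (sg a) - int s) = bar e (int a + (int e - int (rr a) - int s))" .
  have "off e a (bar e (int (sg a) - int s)) = nat (int e - int (rr a) - int s)"
    unfolding eq using s r by (intro off_bar_add[OF epos]) auto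
  then have "inJ' a (bar e (int (sg a) - int s))" unfolding inJ'_def using s r by auto
  moreover have "orb gg (sg a) \<subseteq> {w \<in> SS. inC' a w}" using orb_gg_C'[OF a sg_in[OF a] sg_a_C'[OF a]] .
  ultimately show "bar e (int (sg a) - int s) \<notin> block R (sg a)" using blockR[OF sg_in[OF a]] JC' by blast
qed

lemma kidxR: "a \<in> SS \<Longrightarrow> kidx e R (sg a) = bar e (int a - 1)"
proof -
  assume a: "a \<in> SS"
  have r: "1 \<le> rr a" "rr a \<le> e" using rr_props[OF a] by auto
  have "kidx e R (sg a) = bar e (int (sg a) - int (rdist e R (sg a)))"
    by (rule kidx_def)
  also have "\<dots> = bar e (int (sg a) - int (e + 1 - rr a))"
    by (simp only: rdistR[OF a])
  also have "\<dots> = bar e (int a + (int e - int (rr a)) - int (e + 1 - rr a))"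
    by (subst sg_alt, rule bar_bar_diff[OF epos])
  also have "int a + (int e - int (rr a)) - int (e + 1 - rr a) = int a - 1" using r by simp
  finally show ?thesis .
qed

lemma hatR: assumes a: "a \<in> SS" shows "hat e R (sg a) = {z \<in> SS. inC' a z}"
proof -
  have r: "1 \<le> rr a" "rr a \<le> e" using rr_props[OF a] by auto
  have eqh: "hat e R (sg a) = {bar e (int (sg a) + int s) | s. s \<le> rr a - 1}"
    unfolding hat_def rdistR[OF a] using r by simp
  have gen: "bar e (int (sg a) + int s) = bar e (int a + (int e - int (rr a) + int s))" for s
  proof -
    have "bar e (int (sg a) + int s) = bar e (int a + (int e - int (rr a)) + int s)"
      unfolding sg_alt by (rule bar_bar[OF epos])
    then show ?thesis by (simp add: algebra_simps)
  qed
  show ?thesis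
  proof (rule set_eqI, rule iffI)
    fix z assume "z \<in> hat e R (sg a)"
    then obtain s where s: "s \<le> rr a - 1" "z = bar e (int (sg a) + int s)" unfolding eqh by blast
    have "off e a z = nat (int e - int (rr a) + int s)"
      unfolding s(2) gen using s r by (intro off_bar_add[OF epos]) auto
    then show "z \<in> {z \<in> SS. inC' a z}" using bar_in[OF epos] s unfolding inC'_def by auto
  next
    fix z assume "z \<in> {z \<in> SS. inC' a z}"
    then have z: "z \<in> SS" "e - rr a \<le> off e a z" unfolding inC'_def by auto
    have ol: "off e a z < e" by (rule off_lt[OF epos])
    define s where "s = off e a z - (e - rr a)"
    have "s \<le> rr a - 1" using ol unfolding s_def by simp
    moreover have "bar e (int (sg a) + int s) = z"
      using gen[of s] z r bar_off[OF epos z(1), of a] unfolding s_def by (simp add: of_nat_diff)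
    ultimately show "z \<in> hat e R (sg a)" unfolding eqh by blast
  qed
qed

end


lemma image_reindex:
  assumes "h ` A = A" "\<And>a. a \<in> A \<Longrightarrow> F a = G (h a)"
  shows "F ` A = G ` A"
proof -
  have "F ` A = G ` h ` A" using assms(2) by (auto simp: image_iff)
  then show ?thesis using assms(1) by simp
qed

lemma Mmod_off: "Mmod e i j t = (i, t * e + off e i j + 1)"
  by (simp add: Mmod_def off_def)

context NC begin

lemma ff_surj: "ff ` SS = SS" using endo_inj_surj[OF finS ff_maps ff_inj] .
lemma sg_surj': "sg ` SS = SS" by (rule sg_surj)

lemma HB: assumes a: "a \<in> SS" and q: "q \<in> SS"
  shows "hat e p a \<inter> bl q \<noteq> {} \<longleftrightarrow> off e a q \<le> e - rr a"
proof
  assume "hat e p a \<inter> bl q \<noteq> {}"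
  then obtain w where w: "w \<in> hat e p a" "w \<in> bl q" by blast
  show "off e a q \<le> e - rr a"
  proof (rule ccontr)
    assume "\<not> off e a q \<le> e - rr a"
    then have "e - rr a < off e a w" using gap[OF a q _ w(2)] by simp
    then show False using w(1) hat_p[OF a] by simp
  qed
next
  assume "off e a q \<le> e - rr a"
  then have "q \<in> hat e p a" using hat_p[OF a] q by simp
  then show "hat e p a \<inter> bl q \<noteq> {}" using bl_mem[OF q] by blast
qed

lemma Jq: assumes a: "a \<in> SS" and q: "q \<in> SS"
  shows "(hat e p a \<inter> bl q \<noteq> {} \<and> a \<noteq> q) \<longleftrightarrow> inJ a q"
proof -
  have "a \<noteq> q \<longleftrightarrow> 0 < off e a q" using off_zero[OF epos q a] off_self[OF epos, of a] by auto
  then show ?thesis using HB[OF a q] unfolding inJ_def by auto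
qed

lemma CQ: assumes a: "a \<in> SS" and q: "q \<in> SS"
  shows "hat e Q (ff a) \<inter> block Q q = {} \<longleftrightarrow> inJ a q"
proof
  assume h: "hat e Q (ff a) \<inter> block Q q = {}"
  show "inJ a q"
  proof (rule ccontr)
    assume "\<not> inJ a q"
    then have "q \<in> hat e Q (ff a)" using hatQ[OF a] q JC by blast
    moreover have "q \<in> block Q q" using blockQ[OF q] orb_self by metis
    ultimately show False using h by blast
  qed
next
  assume "inJ a q"
  then have "block Q q \<subseteq> {w \<in> SS. inJ a w}" using blockQ[OF q] orb_ff_J[OF a q] by simp
  then show "hat e Q (ff a) \<inter> block Q q = {}" using hatQ[OF a] JC by blast
qed

lemma CR: assumes a: "a \<in> SS" and q: "q \<in> SS"
  shows "hat e R (sg a) \<inter> block R q = {} \<longleftrightarrow> inJ' a q"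
proof
  assume h: "hat e R (sg a) \<inter> block R q = {}"
  show "inJ' a q"
  proof (rule ccontr)
    assume "\<not> inJ' a q"
    then have "q \<in> hat e R (sg a)" using hatR[OF a] q JC' by blast
    moreover have "q \<in> block R q" using blockR[OF q] orb_self by metis
    ultimately show False using h by blast
  qed
next
  assume "inJ' a q"
  then have "block R q \<subseteq> {w \<in> SS. inJ' a w}" using blockR[OF q] orb_gg_J'[OF a q] by simp
  then show "hat e R (sg a) \<inter> block R q = {}" using hatR[OF a] JC' by blast
qed

lemma blockQ_ff: "q \<in> SS \<Longrightarrow> block Q (ff q) = block Q q"
  using blockQ[OF ff_in] blockQ orb_eq[OF finS ff_maps ff_inj _ orb_f] by simp

lemma cond1: assumes a: "a \<in> SS" and q: "q \<in> SS"
  shows "(hat e Q (ff a) \<inter> block Q q = {}) \<longleftrightarrow> \<not> (hat e p a \<inter> bl q = {} \<or> a = q)"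
  using CQ[OF a q] Jq[OF a q] by blast

lemma cond4: assumes a: "a \<in> SS" and q: "q \<in> SS"
  shows "(hat e Q (ff a) \<inter> block Q (ff q) = {} \<or> ff a = ff q) \<longleftrightarrow> \<not> (hat e p a \<inter> bl q = {})"
proof -
  have "ff a = ff q \<longleftrightarrow> a = q" using ff_inj a q unfolding inj_on_def by blast
  then show ?thesis using CQ[OF a q] blockQ_ff[OF q] HB[OF a q] off_zero[OF epos q a] off_self[OF epos, of a]
    unfolding inJ_def by auto
qed

lemma cond2: assumes a: "a \<in> SS" and q: "q \<in> SS"
  shows "(hat e R (sg a) \<inter> block R q = {} \<or> sg a = q) \<longleftrightarrow> \<not> (hat e p a \<inter> bl q = {})"
proof -
  have "sg a = q \<longleftrightarrow> off e a q = e - rr a"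
    using off_sg[OF a] off_inj[OF epos sg_in[OF a] q] by metis
  then show ?thesis using CR[OF a q] HB[OF a q] unfolding inJ'_def by auto
qed

lemma cond3: assumes a: "a \<in> SS" and q: "q \<in> SS"
  shows "(hat e R (sg a) \<inter> block R (sg q) = {}) \<longleftrightarrow> \<not> (hat e p a \<inter> bl q = {} \<or> a = q)"
proof -
  have "inJ' a (sg q) \<longleftrightarrow> inJ a q"
  proof
    assume "inJ' a (sg q)"
    show "inJ a q"
    proof (rule ccontr)
      assume "\<not> inJ a q"
      then have "inC a q" using JC by blast
      then have "inC' a (sg q)" using I2[OF a q] unfolding inC_def inC'_def by blast
      then show False using \<open>inJ' a (sg q)\<close> JC' by blast
    qed
  next
    assume "inJ a q"
    then show "inJ' a (sg q)" using I1[OF a q] unfolding inJ_def inJ'_def by blast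
  qed
  then show ?thesis using CR[OF a sg_in[OF q]] Jq[OF a q] by blast
qed

lemma off_bar_bar: "off e (bar e x) (bar e y) = nat ((y - x) mod int e)"
proof -
  have "off e (bar e x) (bar e y) = nat ((int (bar e y) - x) mod int e)" by (rule off_bar2[OF epos])
  also have "(int (bar e y) - x) mod int e = (int (bar e y) mod int e - x) mod int e" by (simp add: mod_diff_left_eq)
  also have "\<dots> = (y mod int e - x) mod int e" by (simp only: bar_mod[OF epos])
  also have "\<dots> = (y - x) mod int e" by (simp add: mod_diff_left_eq)
  finally show ?thesis .
qed

lemma len_arith:
  fixes D t r :: nat
  assumes "t \<le> D" "1 \<le> r" "r \<le> e"
  shows "(D + 1) * e + 1 - (t * e + (e - r) + 1) = (D - t) * e + (r - 1) + 1"
proof -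
  obtain k where k: "D = t + k" using assms(1) le_Suc_ex by blast
  have "(D + 1) * e + 1 - (t * e + (e - r) + 1) = (t * e + (e - r) + 1) + (k * e + r) - (t * e + (e - r) + 1)"
    using assms k by (simp add: algebra_simps)
  also have "\<dots> = k * e + r" by simp
  finally show ?thesis using k assms by simp
qed

lemma len_le:
  fixes D t r :: nat
  assumes "t \<le> D" "1 \<le> r" "r \<le> e"
  shows "t * e + (e - r) + 1 \<le> (D + 1) * e"
proof -
  have "t * e \<le> D * e" by (simp add: assms(1))
  moreover have "t * e + (e - r) + 1 \<le> t * e + e" using assms by simp
  moreover have "(D + 1) * e = D * e + e" by simp
  ultimately show ?thesis by linarith
qed

lemma mod_syz:
  assumes a: "a \<in> SS" and t: "t \<le> D"
  shows "syz e ((D + 1) * e) (Mmod e a (sg a) t) = Mmod e (ff a) a (D - t)"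
proof -
  have r: "1 \<le> rr a" "rr a \<le> e" using rr_props[OF a] by auto
  have M: "Mmod e a (sg a) t = (a, t * e + (e - rr a) + 1)" using Mmod_off off_sg[OF a] by simp
  have eq: "int a + int (t * e + (e - rr a) + 1) = (int a + (int e + 1 - int (rr a))) + int t * int e"
    using r by (simp add: of_nat_diff)
  have "bar e (int a + int (t * e + (e - rr a) + 1)) = bar e ((int a + (int e + 1 - int (rr a))) + int t * int e)"
    by (simp only: eq)
  also have "\<dots> = bar e (int a + (int e + 1 - int (rr a)))" by (rule bar_shift[OF epos])
  finally have 1: "bar e (int a + int (t * e + (e - rr a) + 1)) = ff a" using ff_alt by simp
  have "off e (ff a) a = nat ((int a - (int a + (int e + 1 - int (rr a)))) mod int e)"
    unfolding ff_alt by (rule off_bar2[OF epos])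
  also have "(int a - (int a + (int e + 1 - int (rr a)))) = int (rr a) - 1 - int e" by simp
  also have "(int (rr a) - 1 - int e) mod int e = int (rr a) - 1" using r by (subst mod_neg_e) auto
  finally have 2: "off e (ff a) a = rr a - 1" using r by simp
  show ?thesis unfolding syz_def M Mmod_off 2 using 1 len_arith[OF t r] off_sg[OF a] by simp
qed

lemma mod_cosyz:
  assumes a: "a \<in> SS" and t: "t \<le> D"
  shows "cosyz e ((D + 1) * e) (Mmod e a (sg a) t) = Mmod e (sg a) (bar e (int a - 1)) (D - t)"
proof -
  have r: "1 \<le> rr a" "rr a \<le> e" using rr_props[OF a] by auto
  have M: "Mmod e a (sg a) t = (a, t * e + (e - rr a) + 1)" using Mmod_off off_sg[OF a] by simp
  have eq: "int a + int (t * e + (e - rr a) + 1) - 1 - int ((D + 1) * e) = (int a + (int e - int (rr a))) + (int t - int D - 1) * int e"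
    using r by (simp add: of_nat_diff algebra_simps)
  have "bar e (int a + int (t * e + (e - rr a) + 1) - 1 - int ((D + 1) * e)) = bar e ((int a + (int e - int (rr a))) + (int t - int D - 1) * int e)"
    by (simp only: eq)
  also have "\<dots> = bar e (int a + (int e - int (rr a)))" by (rule bar_shift[OF epos])
  finally have 1: "bar e (int a + int (t * e + (e - rr a) + 1) - 1 - int ((D + 1) * e)) = sg a" using sg_alt by simp
  have "off e (sg a) (bar e (int a - 1)) = nat ((int a - 1 - (int a + (int e - int (rr a)))) mod int e)"
    by (subst sg_alt, rule off_bar_bar)
  also have "(int a - 1 - (int a + (int e - int (rr a)))) = int (rr a) - 1 - int e" by simp
  also have "(int (rr a) - 1 - int e) mod int e = int (rr a) - 1" using r by (subst mod_neg_e) auto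
  finally have 2: "off e (sg a) (bar e (int a - 1)) = rr a - 1" using r by simp
  show ?thesis unfolding cosyz_def M Mmod_off 2 using 1 len_arith[OF t r] off_sg[OF a] by simp
qed

end


context NC begin

lemma Om_img:
  assumes l: "l = (D + 1) * e" and t: "\<And>a. a \<in> SS \<Longrightarrow> t a \<le> D"
  shows "Omega e l ((\<lambda>a. Mmod e a (sg a) (t a)) ` SS) = (\<lambda>a. Mmod e (ff a) a (D - t a)) ` SS"
proof -
  have "{X \<in> (\<lambda>a. Mmod e a (sg a) (t a)) ` SS. snd X \<le> l} = (\<lambda>a. Mmod e a (sg a) (t a)) ` SS"
  proof -
    have "snd (Mmod e a (sg a) (t a)) \<le> l" if a: "a \<in> SS" for a
      using len_le[OF t[OF a] rr_props(1,2)[OF a]] l Mmod_off off_sg[OF a] by simp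
    then show ?thesis by auto
  qed
  then have "Omega e l ((\<lambda>a. Mmod e a (sg a) (t a)) ` SS) = (\<lambda>a. syz e l (Mmod e a (sg a) (t a))) ` SS"
    unfolding Omega_def by (simp add: image_image)
  also have "\<dots> = (\<lambda>a. Mmod e (ff a) a (D - t a)) ` SS"
    using mod_syz[OF _ t] l by simp
  finally show ?thesis .
qed

lemma Omi_img:
  assumes l: "l = (D + 1) * e" and t: "\<And>a. a \<in> SS \<Longrightarrow> t a \<le> D"
  shows "Omega_inv e l ((\<lambda>a. Mmod e a (sg a) (t a)) ` SS) = (\<lambda>a. Mmod e (sg a) (bar e (int a - 1)) (D - t a)) ` SS"
proof -
  have "{X \<in> (\<lambda>a. Mmod e a (sg a) (t a)) ` SS. snd X \<le> l} = (\<lambda>a. Mmod e a (sg a) (t a)) ` SS"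
  proof -
    have "snd (Mmod e a (sg a) (t a)) \<le> l" if a: "a \<in> SS" for a
      using len_le[OF t[OF a] rr_props(1,2)[OF a]] l Mmod_off off_sg[OF a] by simp
    then show ?thesis by auto
  qed
  then have "Omega_inv e l ((\<lambda>a. Mmod e a (sg a) (t a)) ` SS) = (\<lambda>a. cosyz e l (Mmod e a (sg a) (t a))) ` SS"
    unfolding Omega_inv_def by (simp add: image_image)
  also have "\<dots> = (\<lambda>a. Mmod e (sg a) (bar e (int a - 1)) (D - t a)) ` SS"
    using mod_cosyz[OF _ t] l by simp
  finally show ?thesis .
qed

lemma Sset_img: "l = (D + 1) * e \<Longrightarrow> Sset e l P q =
   (\<lambda>a. Mmod e a (kidx e P a) (if hat e P a \<inter> block P q = {} \<or> a = q then 0 else D)) ` SS"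
proof -
  assume l: "l = (D + 1) * e"
  have d: "l div e - 1 = D" using l epos by simp
  show ?thesis unfolding Sset_def d by (rule Setcompr_eq_image)
qed

lemma Lset_img: "l = (D + 1) * e \<Longrightarrow> Lset e l P q =
   (\<lambda>a. Mmod e a (kidx e P a) (if hat e P a \<inter> block P q = {} then 0 else D)) ` SS"
proof -
  assume l: "l = (D + 1) * e"
  have d: "l div e - 1 = D" using l epos by simp
  show ?thesis unfolding Lset_def d by (rule Setcompr_eq_image)
qed

lemma part1:
  assumes l: "l = (D + 1) * e" and q: "q \<in> SS"
  shows "Omega e l (Sset e l p q) = Lset e l Q q"
proof -
  have "Omega e l (Sset e l p q) = (\<lambda>a. Mmod e (ff a) a (D - (if hat e p a \<inter> bl q = {} \<or> a = q then 0 else D))) ` SS"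
    unfolding Sset_img[OF l] by (rule Om_img[OF l]) simp
  also have "\<dots> = (\<lambda>b. Mmod e b (kidx e Q b) (if hat e Q b \<inter> block Q q = {} then 0 else D)) ` SS"
    by (rule image_reindex[OF ff_surj]) (use kidxQ cond1 q in auto)
  finally show ?thesis unfolding Lset_img[OF l] .
qed

lemma part4:
  assumes l: "l = (D + 1) * e" and q: "q \<in> SS"
  shows "Omega e l (Lset e l p q) = Sset e l Q (ff q)"
proof -
  have "Omega e l (Lset e l p q) = (\<lambda>a. Mmod e (ff a) a (D - (if hat e p a \<inter> bl q = {} then 0 else D))) ` SS"
    unfolding Lset_img[OF l] by (rule Om_img[OF l]) simp
  also have "\<dots> = (\<lambda>b. Mmod e b (kidx e Q b) (if hat e Q b \<inter> block Q (ff q) = {} \<or> b = ff q then 0 else D)) ` SS"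
    by (rule image_reindex[OF ff_surj]) (use kidxQ cond4 q in auto)
  finally show ?thesis unfolding Sset_img[OF l] .
qed

lemma part2:
  assumes l: "l = (D + 1) * e" and q: "q \<in> SS"
  shows "Omega_inv e l (Lset e l p q) = Sset e l R q"
proof -
  have "Omega_inv e l (Lset e l p q) = (\<lambda>a. Mmod e (sg a) (bar e (int a - 1)) (D - (if hat e p a \<inter> bl q = {} then 0 else D))) ` SS"
    unfolding Lset_img[OF l] by (rule Omi_img[OF l]) simp
  also have "\<dots> = (\<lambda>b. Mmod e b (kidx e R b) (if hat e R b \<inter> block R q = {} \<or> b = q then 0 else D)) ` SS"
    by (rule image_reindex[OF sg_surj]) (use kidxR cond2 q in auto)
  finally show ?thesis unfolding Sset_img[OF l] .
qed

lemma part3: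
  assumes l: "l = (D + 1) * e" and q: "q \<in> SS"
  shows "Omega_inv e l (Sset e l p q) = Lset e l R (sg q)"
proof -
  have "Omega_inv e l (Sset e l p q) = (\<lambda>a. Mmod e (sg a) (bar e (int a - 1)) (D - (if hat e p a \<inter> bl q = {} \<or> a = q then 0 else D))) ` SS"
    unfolding Sset_img[OF l] by (rule Omi_img[OF l]) simp
  also have "\<dots> = (\<lambda>b. Mmod e b (kidx e R b) (if hat e R b \<inter> block R (sg q) = {} then 0 else D)) ` SS"
    by (rule image_reindex[OF sg_surj]) (use kidxR cond3 q in auto)
  finally show ?thesis unfolding Lset_img[OF l] .
qed

end


lemma bar_mod_dvd:
  assumes "0 < m" "e dvd m"
  shows "int (bar m x) mod int e = x mod int e"
proof -
  have "int (bar m x) mod int m = x mod int m" by (rule bar_mod[OF assms(1)])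
  then have "int (bar m x) mod int m mod int e = x mod int m mod int e" by simp
  moreover have "int e dvd int m" using assms(2) by simp
  ultimately show ?thesis by (simp add: mod_mod_cancel)
qed

lemma natmod_iff: "(a::nat) mod e = b mod e \<longleftrightarrow> int a mod int e = int b mod int e"
proof -
  have "a mod e = b mod e \<longleftrightarrow> int (a mod e) = int (b mod e)" by (rule of_nat_eq_iff[symmetric])
  also have "\<dots> \<longleftrightarrow> int a mod int e = int b mod int e" by (simp only: of_nat_mod)
  finally show ?thesis .
qed

lemma lift_mem: "(j, L) \<in> lift n e Y \<longleftrightarrow> j \<in> {1..n} \<and> (\<exists>a. (a, L) \<in> Y \<and> a mod e = j mod e)"
  unfolding lift_def by simp

lemma lift_T:
  fixes n e l :: nat and \<delta> :: "nat \<Rightarrow> int" and \<phi> :: "nat \<Rightarrow> nat"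
  assumes e0: "0 < e" and n0: "0 < n" and dv: "e dvd n"
  shows "(\<lambda>X. (bar n (int (fst X) + \<delta> (snd X)), \<phi> (snd X))) ` {X \<in> lift n e Y. snd X \<le> l}
      = lift n e ((\<lambda>X. (bar e (int (fst X) + \<delta> (snd X)), \<phi> (snd X))) ` {X \<in> Y. snd X \<le> l})"
    (is "?T n ` ?A = lift n e (?T e ` ?B)")
proof (rule set_eqI, rule iffI)
  fix z assume "z \<in> ?T n ` ?A"
  then obtain X where X: "X \<in> lift n e Y" "snd X \<le> l" "z = ?T n X" by blast
  obtain i L where iL0: "X = (i, L)" by (cases X)
  have iL: "(i, L) \<in> lift n e Y" "L \<le> l" "z = ?T n (i, L)" using X iL0 by auto
  have "i \<in> {1..n} \<and> (\<exists>a. (a, L) \<in> Y \<and> a mod e = i mod e)" using iL(1) lift_mem by blast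
  then obtain a where a: "(a, L) \<in> Y" "a mod e = i mod e" "i \<in> {1..n}" by blast
  let ?a' = "bar e (int a + \<delta> L)"
  have "(a, L) \<in> ?B" using a iL by simp
  then have "?T e (a, L) \<in> ?T e ` ?B" by (rule imageI)
  then have in1: "(?a', \<phi> L) \<in> ?T e ` ?B" by simp
  have ai: "int a mod int e = int i mod int e" using a(2) natmod_iff by blast
  have "int ?a' mod int e = (int a + \<delta> L) mod int e" by (rule bar_mod[OF e0])
  also have "\<dots> = (int i + \<delta> L) mod int e" using ai by (rule mod_add_cong) simp
  also have "\<dots> = int (bar n (int i + \<delta> L)) mod int e" using bar_mod_dvd[OF n0 dv] by simp
  finally have md: "?a' mod e = bar n (int i + \<delta> L) mod e" using natmod_iff by blast
  have "(bar n (int i + \<delta> L), \<phi> L) \<in> lift n e (?T e ` ?B)"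
    unfolding lift_mem using in1 md bar_in[OF n0] by blast
  then show "z \<in> lift n e (?T e ` ?B)" using iL(3) by simp
next
  fix z assume zin: "z \<in> lift n e (?T e ` ?B)"
  obtain j L' where z1: "z = (j, L')" by (cases z)
  have "j \<in> {1..n} \<and> (\<exists>a. (a, L') \<in> ?T e ` ?B \<and> a mod e = j mod e)" using zin z1 lift_mem by blast
  then obtain a' where z: "j \<in> {1..n}" "(a', L') \<in> ?T e ` ?B" "a' mod e = j mod e" by blast
  then obtain X where X: "X \<in> ?B" "(a', L') = ?T e X" by blast
  obtain a L where aL0: "X = (a, L)" by (cases X)
  have aL: "(a, L) \<in> Y" "L \<le> l" "a' = bar e (int a + \<delta> L)" "L' = \<phi> L" using X aL0 by auto
  let ?i = "bar n (int j - \<delta> L)"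
  have ja: "int j mod int e = int a' mod int e" using z(3) natmod_iff by metis
  also have "\<dots> = (int a + \<delta> L) mod int e" using aL(3) bar_mod[OF e0] by simp
  finally have ja': "int j mod int e = (int a + \<delta> L) mod int e" .
  have "int ?i mod int e = (int j - \<delta> L) mod int e" by (rule bar_mod_dvd[OF n0 dv])
  also have "\<dots> = (int a + \<delta> L - \<delta> L) mod int e" using ja' by (rule mod_diff_cong) simp
  finally have "int ?i mod int e = int a mod int e" by simp
  then have am: "a mod e = ?i mod e" using natmod_iff by metis
  have "(?i, L) \<in> lift n e Y" unfolding lift_mem using aL(1) am bar_in[OF n0] by blast
  then have "(?i, L) \<in> ?A" using aL(2) by simp
  then have "?T n (?i, L) \<in> ?T n ` ?A" by (rule imageI)
  moreover have "?T n (?i, L) = z"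
  proof -
    have "bar n (int ?i + \<delta> L) = bar n (int j - \<delta> L + \<delta> L)" by (rule bar_bar[OF n0])
    also have "\<dots> = j" using bar_id[OF n0 z(1)] by simp
    finally show ?thesis using z1 aL(4) by simp
  qed
  ultimately show "z \<in> ?T n ` ?A" by simp
qed

lemma Omega_lift:
  assumes "0 < e" "0 < n" "e dvd n"
  shows "Omega n l (lift n e Y) = lift n e (Omega e l Y)"
  unfolding Omega_def syz_def[abs_def]
  using lift_T[OF assms, of "\<lambda>L. int L" "\<lambda>L. l + 1 - L" Y l] by simp

lemma cosyz_alt: "cosyz n l = (\<lambda>X. (bar n (int (fst X) + (int (snd X) - 1 - int l)), l + 1 - snd X))"
  unfolding cosyz_def by (simp add: fun_eq_iff algebra_simps)

lemma Omega_inv_lift: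
  assumes "0 < e" "0 < n" "e dvd n"
  shows "Omega_inv n l (lift n e Y) = lift n e (Omega_inv e l Y)"
  unfolding Omega_inv_def cosyz_alt
  using lift_T[OF assms, of "\<lambda>L. int L - 1 - int l" "\<lambda>L. l + 1 - L" Y l] by simp

theorem theorem5p8:
  fixes n l i :: nat and p :: "nat set set"
  defines "e \<equiv> gcd n l"
  assumes "0 < n" and "0 < l"
    and "noncrossing e p"
    and "1 \<le> i" and "i \<le> e"
  shows "Omega n l (Sset' n l p i) = Lset' n l (m1 e p) i
       \<and> Omega_inv n l (Lset' n l p i) = Sset' n l (m2 e p) i
       \<and> Omega_inv n l (Sset' n l p i) = Lset' n l (m2 e p) (kidx e p i)
       \<and> Omega n l (Lset' n l p i) = Sset' n l (m1 e p) (bar e (int (kidx e p i) + 1))"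
proof -
  have e0: "0 < e" unfolding e_def using assms(2) by simp
  have en: "e dvd n" and el: "e dvd l" unfolding e_def by auto
  interpret NC e p using e0 assms(4) by unfold_locales
  define D where "D = l div e - 1"
  have le: "l div e * e = l" using el by simp
  have "l div e \<noteq> 0"
  proof
    assume "l div e = 0"
    then show False using le assms(3) by simp
  qed
  then have "D + 1 = l div e" unfolding D_def by simp
  then have l: "l = (D + 1) * e" using le by simp
  have iS: "i \<in> {1..e}" using assms(5,6) by simp
  have S': "\<And>P k. Sset' n l P k = lift n e (Sset e l P k)" unfolding Sset'_def e_def ..
  have L': "\<And>P k. Lset' n l P k = lift n e (Lset e l P k)" unfolding Lset'_def e_def ..
  have ffi: "bar e (int (kidx e p i) + 1) = ff i" by (simp add: ff_def)
  show ?thesis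
    unfolding S' L' Omega_lift[OF e0 assms(2) en] Omega_inv_lift[OF e0 assms(2) en] ffi
    using part1[OF l iS] part2[OF l iS] part3[OF l iS] part4[OF l iS] by simp
qed


end
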